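(* Let $v \sim \mathcal{N}(0, I_d)$, $p \ge 1$ and $r > 0$ with $r^2 \ge d$. Then $$\mathbb{E}[\|v\|^p \mid \|v\|^2 \ge r^2] \le (2r)^p + 4(d + 2p)^{p/2} \exp(-r^2/8).$$
   Context: $\|\cdot\|$ is the Euclidean norm; the expectation is conditional on the event $\{\|v\|^2\ge r^2\}$. *)

theory Defs
  imports "HOL-Probability.Probability"
begin

definition std_gauss_density :: "'a::euclidean_space \<Rightarrow> real" where
  "std_gauss_density x = (2 * pi) powr (- real DIM('a) / 2) * exp (- (norm x)\<^sup>2 / 2)"

definition std_gauss :: "'a::euclidean_space measure" where
  "std_gauss = density lborel (\<lambda>x. ennreal (std_gauss_density x))"

definition cond_exp_event :: "'a measure \<Rightarrow> 'a set \<Rightarrow> ('a \<Rightarrow> real) \<Rightarrow> real" where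
  "cond_exp_event M A f = (\<integral>x\<in>A. f x \<partial>M) / measure M A"

end

theory Submission imports Defs begin

lemma key_ineq:
  fixes d p r s :: real
  assumes p: "p \<ge> 1" and r: "r > 0" and d: "d \<le> r\<^sup>2" "d \<ge> 0" and s: "r \<le> s"
  shows "2 powr d * (2 * s) powr p * exp (- 3 * s\<^sup>2 / 2) \<le> (d + 2 * p) powr (p / 2) * exp (- r\<^sup>2 / 8)"
proof -
  have s0: "s > 0" using r s by linarith
  have rs: "r\<^sup>2 \<le> s\<^sup>2" using r s by (simp add: power_mono)
  have "2 \<le> exp (3/4::real)"
    using exp_lower_Taylor_quadratic[of "3/4::real"] by (simp add: power2_eq_square)
  hence ln2: "ln 2 \<le> (3/4::real)" by (metis exp_gt_zero ln_exp ln_le_cancel_iff zero_less_numeral)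
  have "2 powr d = exp (d * ln 2)" by (simp add: powr_def)
  also have "\<dots> \<le> exp (3/4 * s\<^sup>2)"
  proof -
    have "d * ln 2 \<le> s\<^sup>2 * ln 2" using d rs by (intro mult_right_mono) auto
    also have "\<dots> \<le> s\<^sup>2 * (3/4)" using ln2 by (intro mult_left_mono) auto
    finally show ?thesis by simp
  qed
  finally have h1: "2 powr d \<le> exp (3/4 * s\<^sup>2)" .
  define t where "t = s\<^sup>2 / p"
  have t0: "t \<ge> 0" using p unfolding t_def by simp
  have "2 * t \<le> 1 + t + t\<^sup>2 / 2"
  proof -
    have "0 \<le> (t - 1)\<^sup>2 / 2" by simp
    thus ?thesis by (simp add: power2_eq_square field_simps)
  qed
  also have "\<dots> \<le> exp t" using exp_lower_Taylor_quadratic[OF t0] .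
  finally have "2 * t \<le> exp t" .
  hence "4 * s\<^sup>2 \<le> 2 * p * exp t" using p unfolding t_def by (simp add: field_simps)
  hence h2: "4 * s\<^sup>2 * exp (- t) \<le> 2 * p" by (simp add: exp_minus field_simps)
  have h3: "(2 * s) powr p * exp (- s\<^sup>2 / 2) = (4 * s\<^sup>2 * exp (- t)) powr (p / 2)"
  proof -
    have e1: "4 * s\<^sup>2 * exp (- t) = ((2 * s) powr 2) * exp (- t)"
      using s0 by (simp add: powr_numeral power2_eq_square)
    have "(4 * s\<^sup>2 * exp (- t)) powr (p / 2) = ((2 * s) powr 2) powr (p/2) * exp (- t) powr (p/2)"
      unfolding e1 using s0 by (simp add: powr_mult)
    also have "((2 * s) powr 2) powr (p/2) = (2 * s) powr p"
      by (simp add: powr_powr)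
    also have "exp (- t) powr (p/2) = exp (- s\<^sup>2 / 2)"
      using p unfolding t_def powr_def by simp
    finally show ?thesis by simp
  qed
  have h4: "(4 * s\<^sup>2 * exp (- t)) powr (p / 2) \<le> (d + 2 * p) powr (p / 2)"
  proof (rule powr_mono2)
    show "4 * s\<^sup>2 * exp (- t) \<le> d + 2 * p" using h2 d by linarith
  qed (use p in auto)
  have "2 powr d * (2 * s) powr p * exp (- 3 * s\<^sup>2 / 2)
      \<le> exp (3/4 * s\<^sup>2) * (2 * s) powr p * exp (- 3 * s\<^sup>2 / 2)"
    using h1 by (intro mult_right_mono) auto
  also have "\<dots> = ((2 * s) powr p * exp (- s\<^sup>2 / 2)) * exp (- s\<^sup>2 / 4)"
    by (simp add: exp_add[symmetric])
  also have "\<dots> \<le> (d + 2 * p) powr (p / 2) * exp (- r\<^sup>2 / 8)"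
  proof -
    have rs2: "r\<^sup>2 \<le> s\<^sup>2 * 2" using rs zero_le_power2[of s] by linarith
    show ?thesis using h3 h4 rs2 by (intro mult_mono) auto
  qed
  finally show ?thesis .
qed

lemma gauss_meas[measurable]: "(std_gauss_density :: 'a::euclidean_space \<Rightarrow> real) \<in> borel_measurable borel"
  unfolding std_gauss_density_def[abs_def] by measurable

lemma gauss_scale:
  fixes x :: "'a::euclidean_space"
  shows "std_gauss_density (2 *\<^sub>R x) = std_gauss_density x * exp (- 3 * (norm x)\<^sup>2 / 2)"
  unfolding std_gauss_density_def
  by (simp add: exp_add[symmetric] power2_eq_square algebra_simps)

theorem lemmaA8:
  fixes p r :: real
  assumes "p \<ge> 1" and "r > 0" and "r\<^sup>2 \<ge> real DIM('a::euclidean_space)"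
  shows "cond_exp_event (std_gauss :: 'a measure) {v. (norm v)\<^sup>2 \<ge> r\<^sup>2} (\<lambda>v. norm v powr p)
           \<le> (2 * r) powr p + 4 * (real DIM('a) + 2 * p) powr (p / 2) * exp (- r\<^sup>2 / 8)"
proof -
  define d where "d = real DIM('a)"
  define \<phi> where "\<phi> = (std_gauss_density :: 'a \<Rightarrow> real)"
  define A where "A = {v::'a. (norm v)\<^sup>2 \<ge> r\<^sup>2}"
  define B where "B = {v::'a. 2 * r < norm v}"
  define K where "K = (d + 2*p) powr (p/2) * exp (- r\<^sup>2 / 8)"
  define C where "C = (2*r) powr p + 4 * K"
  define \<gamma> where "\<gamma> = (std_gauss :: 'a measure)"
  have phi_pos: "\<phi> x > 0" for x unfolding \<phi>_def std_gauss_density_def by simp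
  have phi_meas[measurable]: "\<phi> \<in> borel_measurable borel" unfolding \<phi>_def by measurable
  have A_meas[measurable]: "A \<in> sets borel" unfolding A_def by measurable
  have B_meas[measurable]: "B \<in> sets borel" unfolding B_def by measurable
  have A_iff: "x \<in> A \<longleftrightarrow> r \<le> norm x" for x
    using assms(2) unfolding A_def by (auto simp: abs_le_square_iff[symmetric])
  have K0: "K \<ge> 0" unfolding K_def by simp
  have C0: "C \<ge> 0" unfolding C_def using K0 by simp
  have sets_g: "sets \<gamma> = sets borel" unfolding \<gamma>_def std_gauss_def by simp
  have E: "emeasure \<gamma> A = (\<integral>\<^sup>+ x. ennreal (\<phi> x * indicator A x) \<partial>lborel)"
    unfolding \<gamma>_def std_gauss_def \<phi>_def
    by (subst emeasure_density) (auto intro!: nn_integral_cong simp: indicator_def)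
  have NN: "(\<integral>\<^sup>+ x. ennreal (indicator A x * norm x powr p) \<partial>\<gamma>) \<le> ennreal C * emeasure \<gamma> A"
  proof -
    define \<psi> where "\<psi> x = \<phi> x * indicator B x * norm x powr p" for x
    have psi_meas[measurable]: "\<psi> \<in> borel_measurable borel" unfolding \<psi>_def by measurable
    have psi0: "\<psi> x \<ge> 0" for x unfolding \<psi>_def using phi_pos[of x] by simp
    have phi0: "\<phi> x \<ge> 0" for x using phi_pos[of x] by simp
    have c0: "(2*r) powr p \<ge> 0" by simp
    have "(\<integral>\<^sup>+ x. ennreal (indicator A x * norm x powr p) \<partial>\<gamma>)
        = (\<integral>\<^sup>+ x. ennreal (\<phi> x * (indicator A x * norm x powr p)) \<partial>lborel)"
      unfolding \<gamma>_def std_gauss_def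
      by (subst nn_integral_density) (auto intro!: nn_integral_cong simp: ennreal_mult' phi0 \<phi>_def[symmetric])
    also have "\<dots> \<le> (\<integral>\<^sup>+ x. ennreal ((2*r) powr p * (\<phi> x * indicator A x)) + ennreal (\<psi> x) \<partial>lborel)"
    proof (rule nn_integral_mono)
      fix x
      have "\<phi> x * (indicator A x * norm x powr p) \<le> (2*r) powr p * (\<phi> x * indicator A x) + \<psi> x"
      proof (cases "x \<in> A")
        case False thus ?thesis using psi0[of x] by simp
      next
        case xA: True
        show ?thesis
        proof (cases "x \<in> B")
          case True
          with xA show ?thesis using phi0[of x] c0 unfolding \<psi>_def by simp
        next
          case False
          hence "norm x \<le> 2*r" unfolding B_def by simp
          hence "norm x powr p \<le> (2*r) powr p" using assms by (intro powr_mono2) auto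
          hence "\<phi> x * norm x powr p \<le> \<phi> x * (2*r) powr p" using phi0[of x] by (intro mult_left_mono) auto
          with xA show ?thesis using psi0[of x] by (simp add: mult.commute)
        qed
      qed
      hence le: "ennreal (\<phi> x * (indicator A x * norm x powr p)) \<le> ennreal ((2*r) powr p * (\<phi> x * indicator A x) + \<psi> x)"
        by (rule ennreal_leI)
      have n1: "0 \<le> (2*r) powr p * (\<phi> x * indicator A x)" using phi0[of x] c0 by simp
      show "ennreal (\<phi> x * (indicator A x * norm x powr p)) \<le> ennreal ((2*r) powr p * (\<phi> x * indicator A x)) + ennreal (\<psi> x)"
        using le unfolding ennreal_plus[OF n1 psi0[of x]] .
    qed
    also have "\<dots> = (\<integral>\<^sup>+ x. ennreal ((2*r) powr p) * ennreal (\<phi> x * indicator A x) \<partial>lborel) + (\<integral>\<^sup>+ x. ennreal (\<psi> x) \<partial>lborel)"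
      by (subst nn_integral_add) (auto simp: ennreal_mult' c0)
    also have "(\<integral>\<^sup>+ x. ennreal ((2*r) powr p) * ennreal (\<phi> x * indicator A x) \<partial>lborel) = ennreal ((2*r) powr p) * emeasure \<gamma> A"
      unfolding E by (rule nn_integral_cmult) measurable
    also have "(\<integral>\<^sup>+ x. ennreal (\<psi> x) \<partial>lborel) = ennreal (2 ^ DIM('a)) * (\<integral>\<^sup>+ x. ennreal (\<psi> (2 *\<^sub>R x)) \<partial>lborel)"
    proof -
      have "(lborel :: 'a measure) = density (distr lborel borel (\<lambda>x. 0 + (2::real) *\<^sub>R x)) (\<lambda>_. \<bar>2::real\<bar> ^ DIM('a))"
        by (rule lborel_affine) simp
      hence "(\<integral>\<^sup>+ x. ennreal (\<psi> x) \<partial>lborel) = (\<integral>\<^sup>+ x. ennreal (\<psi> x) \<partial>density (distr lborel borel (\<lambda>x. 0 + (2::real) *\<^sub>R x)) (\<lambda>_. \<bar>2::real\<bar> ^ DIM('a)))"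
        by simp
      also have "\<dots> = ennreal (2 ^ DIM('a)) * (\<integral>\<^sup>+ x. ennreal (\<psi> (2 *\<^sub>R x)) \<partial>lborel)"
        by (simp add: nn_integral_density nn_integral_distr nn_integral_cmult)
      finally show ?thesis .
    qed
    also have "\<dots> = (\<integral>\<^sup>+ x. ennreal (2 ^ DIM('a) * \<psi> (2 *\<^sub>R x)) \<partial>lborel)"
      by (subst nn_integral_cmult[symmetric]) (auto simp: ennreal_mult')
    also have "\<dots> \<le> (\<integral>\<^sup>+ x. ennreal (4 * K) * ennreal (\<phi> x * indicator A x) \<partial>lborel)"
    proof (rule nn_integral_mono)
      fix x :: 'a
      have "2 ^ DIM('a) * \<psi> (2 *\<^sub>R x) \<le> 4 * K * (\<phi> x * indicator A x)"
      proof (cases "2 *\<^sub>R x \<in> B")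
        case False thus ?thesis unfolding \<psi>_def using phi0[of x] K0 by simp
      next
        case True
        hence rx: "r \<le> norm x" unfolding B_def by simp
        hence xA: "x \<in> A" using A_iff by simp
        have k: "2 powr d * (2 * norm x) powr p * exp (- 3 * (norm x)\<^sup>2 / 2) \<le> K"
          unfolding K_def using key_ineq[OF assms(1,2) _ _ rx, of d] assms(3) unfolding d_def by simp
        have "2 ^ DIM('a) * \<psi> (2 *\<^sub>R x) = \<phi> x * (2 powr d * (2 * norm x) powr p * exp (- 3 * (norm x)\<^sup>2 / 2))"
          using True unfolding \<psi>_def \<phi>_def gauss_scale d_def
          by (simp add: powr_realpow)
        also have "\<dots> \<le> \<phi> x * K" using k phi0[of x] by (rule mult_left_mono)
        also have "\<dots> \<le> 4 * K * (\<phi> x * indicator A x)" using xA phi0[of x] K0 by simp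
        finally show ?thesis .
      qed
      thus "ennreal (2 ^ DIM('a) * \<psi> (2 *\<^sub>R x)) \<le> ennreal (4 * K) * ennreal (\<phi> x * indicator A x)"
        using K0 by (subst ennreal_mult'[symmetric]) (auto intro: ennreal_leI)
    qed
    also have "\<dots> = ennreal (4 * K) * emeasure \<gamma> A"
      unfolding E by (rule nn_integral_cmult) measurable
    also have "ennreal ((2*r) powr p) * emeasure \<gamma> A + ennreal (4 * K) * emeasure \<gamma> A = ennreal C * emeasure \<gamma> A"
    proof -
      have "ennreal C = ennreal ((2*r) powr p) + ennreal (4 * K)" unfolding C_def using K0 c0 by simp
      thus ?thesis by (simp add: distrib_right)
    qed
    finally show ?thesis by simp
  qed
  have goal_eq: "(2 * r) powr p + 4 * (real DIM('a) + 2 * p) powr (p / 2) * exp (- r\<^sup>2 / 8) = C"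
    unfolding C_def K_def d_def by simp
  have f_meas: "(\<lambda>x::'a. indicator A x * norm x powr p) \<in> borel_measurable \<gamma>"
    unfolding \<gamma>_def std_gauss_def by measurable
  show ?thesis
  proof (cases "measure \<gamma> A = 0")
    case True
    have "cond_exp_event \<gamma> A (\<lambda>v. norm v powr p) = 0"
      unfolding cond_exp_event_def True by (rule div_by_0)
    thus ?thesis unfolding goal_eq \<gamma>_def A_def using C0 by linarith
  next
    case False
    hence fin: "emeasure \<gamma> A < \<infinity>"
      by (metis infinity_ennreal_def less_top measure_def enn2real_top)
    have "(\<integral>x\<in>A. norm x powr p \<partial>\<gamma>) = integral\<^sup>L \<gamma> (\<lambda>x. indicator A x * norm x powr p)"
      unfolding set_lebesgue_integral_def by simp
    also have "\<dots> = enn2real (\<integral>\<^sup>+ x. ennreal (indicator A x * norm x powr p) \<partial>\<gamma>)"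
      by (rule integral_eq_nn_integral[OF f_meas]) simp
    also have "\<dots> \<le> enn2real (ennreal C * emeasure \<gamma> A)"
      using NN fin C0 by (intro enn2real_mono) (auto simp: ennreal_mult_less_top)
    also have "\<dots> = C * measure \<gamma> A"
      by (simp only: enn2real_mult enn2real_ennreal[OF C0] measure_def)
    finally have "(\<integral>x\<in>A. norm x powr p \<partial>\<gamma>) \<le> C * measure \<gamma> A" .
    moreover have "measure \<gamma> A > 0" using False measure_nonneg[of \<gamma> A] by linarith
    ultimately have "cond_exp_event \<gamma> A (\<lambda>v. norm v powr p) \<le> C"
      unfolding cond_exp_event_def by (metis pos_divide_le_eq mult.commute)
    thus ?thesis unfolding goal_eq \<gamma>_def A_def .
  qed
qed

end
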